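(* Let $f:2^{[n]}\to\mathbb{R}$ be submodular with $f(\emptyset)=0$. Let $x\in[0,1]^n$ and $d\in\mathbb{R}^n_{\ge 0}$, and let $S=\{i: d_i\neq 0\}$. If $y=x+d\in[0,1]^n$, then $g(y)_i\le g(x)_i$ for all $i\notin S$. If instead $y=x-d\in[0,1]^n$, then $g(y)_i\ge g(x)_i$ for all $i\notin S$.
   Context: Notation: $[n]=\{1,\dots,n\}$. For a permutation $P=(P_1,\dots,P_n)$ of $[n]$, write $P[j]=\{P_1,\dots,P_j\}$ for $0\le j\le n$ (so $P[0]=\emptyset$). For $x\in\mathbb{R}^n$, the permutation $P_x$ consistent with $x$ is the permutation with $x_{P_1}\ge x_{P_2}\ge\dots\ge x_{P_n}$, ties broken lexicographically (among equal coordinates, the smaller index comes first). The Lovász subgradient of $f$ at $x\in[0,1]^n$ is the vector $g(x)\in\mathbb{R}^n$ defined by $g(x)_{P_k}=f(P[k])-f(P[k-1])$ for $k\in[n]$, where $P=P_x$. *)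

theory Defs
  imports Complex_Main
begin

text \<open>Ground set [n] = {1..n}; vectors in R^n are functions nat => real,
  only the coordinates in {1..n} matter.  A permutation of [n] is a bijection
  P : {1..n} -> {1..n} (P k is the k-th entry P_k), extended by the identity
  outside {1..n}.\<close>

definition submodular :: "nat \<Rightarrow> (nat set \<Rightarrow> real) \<Rightarrow> bool" where
  "submodular n f \<longleftrightarrow>
     (\<forall>A B. A \<subseteq> {1..n} \<longrightarrow> B \<subseteq> {1..n} \<longrightarrow> f (A \<union> B) + f (A \<inter> B) \<le> f A + f B)"

definition consistent_perm :: "nat \<Rightarrow> (nat \<Rightarrow> real) \<Rightarrow> (nat \<Rightarrow> nat) \<Rightarrow> bool" where
  "consistent_perm n x P \<longleftrightarrow>
     bij_betw P {1..n} {1..n} \<and> (\<forall>k. k \<notin> {1..n} \<longrightarrow> P k = k) \<and>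
     (\<forall>k\<in>{1..n}. \<forall>l\<in>{1..n}. k < l \<longrightarrow>
        x (P k) > x (P l) \<or> (x (P k) = x (P l) \<and> P k < P l))"

definition perm_of :: "nat \<Rightarrow> (nat \<Rightarrow> real) \<Rightarrow> (nat \<Rightarrow> nat)" where
  "perm_of n x = (THE P. consistent_perm n x P)"

definition prefix :: "(nat \<Rightarrow> nat) \<Rightarrow> nat \<Rightarrow> nat set" where
  "prefix P j = P ` {1..j}"

definition lovasz_grad :: "nat \<Rightarrow> (nat set \<Rightarrow> real) \<Rightarrow> (nat \<Rightarrow> real) \<Rightarrow> nat \<Rightarrow> real" where
  "lovasz_grad n f x i =
     (let P = perm_of n x; k = (THE k. k \<in> {1..n} \<and> P k = i)
      in f (prefix P k) - f (prefix P (k - 1)))"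

end

theory Submission
  imports Defs
begin

definition prec :: "(nat \<Rightarrow> real) \<Rightarrow> nat \<Rightarrow> nat \<Rightarrow> bool" where
  "prec x j i \<longleftrightarrow> x j > x i \<or> (x j = x i \<and> j < i)"

definition predset :: "nat \<Rightarrow> (nat \<Rightarrow> real) \<Rightarrow> nat \<Rightarrow> nat set" where
  "predset n x i = {j\<in>{1..n}. prec x j i}"

lemma prec_irrefl: "\<not> prec x i i" by (auto simp: prec_def)
lemma prec_asym: "prec x i j \<Longrightarrow> \<not> prec x j i" by (auto simp: prec_def)
lemma prec_trans: "prec x a b \<Longrightarrow> prec x b c \<Longrightarrow> prec x a c" by (auto simp: prec_def)
lemma prec_total: "a \<noteq> b \<Longrightarrow> prec x a b \<or> prec x b a" by (auto simp: prec_def)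

lemma cons_prefix:
  assumes c: "consistent_perm n x P" and k: "k \<in> {1..n}"
  shows "prefix P (k-1) = predset n x (P k)"
proof
  have b: "bij_betw P {1..n} {1..n}" and m: "\<forall>k\<in>{1..n}. \<forall>l\<in>{1..n}. k < l \<longrightarrow> prec x (P k) (P l)"
    using c unfolding consistent_perm_def prec_def by auto
  show "prefix P (k-1) \<subseteq> predset n x (P k)"
  proof
    fix j assume "j \<in> prefix P (k-1)"
    then obtain m' where "m' \<in> {1..k-1}" "j = P m'" by (auto simp: prefix_def)
    then show "j \<in> predset n x (P k)" using m k b
      by (auto simp: predset_def bij_betw_def)
  qed
  show "predset n x (P k) \<subseteq> prefix P (k-1)"
  proof
    fix j assume j: "j \<in> predset n x (P k)"
    then have "j \<in> {1..n}" by (auto simp: predset_def)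
    then have "j \<in> P ` {1..n}" using b by (simp add: bij_betw_def)
    then obtain m' where m': "m' \<in> {1..n}" "j = P m'" by blast
    have "m' < k"
    proof (rule ccontr)
      assume "\<not> m' < k"
      then consider "m' = k" | "k < m'" by linarith
      then show False
      proof cases
        case 1 then show ?thesis using j m' prec_irrefl by (auto simp: predset_def)
      next
        case 2 then have "prec x (P k) (P m')" using m k m' by auto
        then show ?thesis using j m' prec_asym by (auto simp: predset_def)
      qed
    qed
    then show "j \<in> prefix P (k-1)" using m' by (auto simp: prefix_def)
  qed
qed

lemma cons_rank:
  assumes c: "consistent_perm n x P" and k: "k \<in> {1..n}"
  shows "card (predset n x (P k)) = k - 1"
proof -
  have b: "bij_betw P {1..n} {1..n}" using c unfolding consistent_perm_def by auto
  have "inj_on P {1..k-1}" proof -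
    have "{1..k-1} \<subseteq> {1..n}" using k by auto
    then show ?thesis using b unfolding bij_betw_def by (blast intro: inj_on_subset)
  qed
  then have "card (prefix P (k-1)) = k - 1" by (simp add: prefix_def card_image)
  then show ?thesis using cons_prefix[OF c k] by simp
qed

lemma cons_unique:
  assumes c: "consistent_perm n x P" and d: "consistent_perm n x Q"
  shows "P = Q"
proof
  fix k
  show "P k = Q k"
  proof (cases "k \<in> {1..n}")
    case False then show ?thesis using c d by (auto simp: consistent_perm_def)
  next
    case True
    have bP: "bij_betw P {1..n} {1..n}" and bQ: "bij_betw Q {1..n} {1..n}"
      using c d unfolding consistent_perm_def by auto
    then have "Q k \<in> {1..n}" using True by (auto simp: bij_betw_def)
    then have "Q k \<in> P ` {1..n}" using bP by (simp add: bij_betw_def)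
    then obtain m where m: "m \<in> {1..n}" "Q k = P m" by blast
    have "card (predset n x (P m)) = m - 1" using cons_rank[OF c m(1)] .
    moreover have "card (predset n x (Q k)) = k - 1" using cons_rank[OF d True] .
    ultimately have "m = k" using m True by auto
    then show ?thesis using m by simp
  qed
qed

lemma cons_exists: "\<exists>P. consistent_perm n x P"
proof -
  define r where "r j = card (predset n x j) + 1" for j
  have fin: "finite (predset n x j)" for j by (auto simp: predset_def)
  have rin: "r j \<in> {1..n}" if "j \<in> {1..n}" for j
  proof -
    have "predset n x j \<subseteq> {1..n} - {j}" using prec_irrefl by (auto simp: predset_def)
    then have "card (predset n x j) \<le> card ({1..n} - {j})" by (intro card_mono) auto
    then show ?thesis using that by (auto simp: r_def)
  qed
  have rlt: "r j < r l" if "j \<in> {1..n}" "l \<in> {1..n}" "prec x j l" for j l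
  proof -
    have "predset n x j \<subset> predset n x l"
      using that prec_trans[of x _ j l] prec_irrefl[of x j] unfolding predset_def by blast
    then show ?thesis using fin psubset_card_mono by (auto simp: r_def)
  qed
  have inj: "inj_on r {1..n}"
  proof (rule inj_onI, rule ccontr)
    fix j l assume "j \<in> {1..n}" "l \<in> {1..n}" "r j = r l" "j \<noteq> l"
    then show False using prec_total[of j l x] rlt by force
  qed
  have "r ` {1..n} \<subseteq> {1..n}" using rin by auto
  then have "r ` {1..n} = {1..n}" using endo_inj_surj[OF _ _ inj] by simp
  then have br: "bij_betw r {1..n} {1..n}" using inj by (simp add: bij_betw_def)
  define P where "P k = (if k \<in> {1..n} then the_inv_into {1..n} r k else k)" for k
  have bP: "bij_betw P {1..n} {1..n}"
    using bij_betw_the_inv_into[OF br] by (rule bij_betw_cong[THEN iffD1, rotated]) (simp add: P_def)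
  have rP: "r (P k) = k" if "k \<in> {1..n}" for k
    using that f_the_inv_into_f_bij_betw[OF br] by (simp add: P_def)
  have "prec x (P k) (P l)" if "k \<in> {1..n}" "l \<in> {1..n}" "k < l" for k l
  proof -
    have in1: "P k \<in> {1..n}" "P l \<in> {1..n}" using bP that by (auto simp: bij_betw_def)
    have "P k \<noteq> P l" using rP that by (metis less_irrefl)
    moreover have "\<not> prec x (P l) (P k)" using rlt[OF in1(2) in1(1)] rP that by auto
    ultimately show ?thesis using prec_total by blast
  qed
  then have "consistent_perm n x P" using bP
    by (auto simp: consistent_perm_def P_def prec_def)
  then show ?thesis by blast
qed

lemma perm_of_cons: "consistent_perm n x (perm_of n x)"
proof -
  have "\<exists>!P. consistent_perm n x P" using cons_exists cons_unique by blast
  then show ?thesis unfolding perm_of_def by (rule theI')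
qed

lemma grad_eq:
  assumes i: "i \<in> {1..n}"
  shows "lovasz_grad n f x i = f (insert i (predset n x i)) - f (predset n x i)"
proof -
  define P where "P = perm_of n x"
  have c: "consistent_perm n x P" using perm_of_cons P_def by simp
  have b: "bij_betw P {1..n} {1..n}" using c unfolding consistent_perm_def by blast
  have "i \<in> P ` {1..n}" using b i by (simp add: bij_betw_def)
  then obtain k where k: "k \<in> {1..n}" "P k = i" by blast
  have inj: "inj_on P {1..n}" using b by (simp add: bij_betw_def)
  have u: "(THE k. k \<in> {1..n} \<and> P k = i) = k"
  proof (rule the_equality)
    show "k \<in> {1..n} \<and> P k = i" using k by simp
    fix m assume "m \<in> {1..n} \<and> P m = i"
    then show "m = k" using k inj unfolding inj_on_def by blast
  qed
  have "{1..k} = insert k {1..k-1}" using k by auto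
  then have pk: "prefix P k = insert i (prefix P (k-1))" using k by (simp add: prefix_def)
  have pk1: "prefix P (k-1) = predset n x i" using cons_prefix[OF c k(1)] k(2) by simp
  have "lovasz_grad n f x i = f (prefix P k) - f (prefix P (k - 1))"
    unfolding lovasz_grad_def Let_def P_def[symmetric] u by (rule refl)
  then show ?thesis using pk pk1 by simp
qed

lemma submod_step:
  assumes sm: "submodular n f" and AB: "A \<subseteq> B" "B \<subseteq> {1..n}" and i: "i \<in> {1..n}" "i \<notin> B"
  shows "f (insert i B) - f B \<le> f (insert i A) - f A"
proof -
  have "f (insert i A \<union> B) + f (insert i A \<inter> B) \<le> f (insert i A) + f B"
    proof -
    have "insert i A \<subseteq> {1..n}" using AB i by auto
    then show ?thesis using sm AB(2) unfolding submodular_def by blast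
  qed
  moreover have "insert i A \<union> B = insert i B" "insert i A \<inter> B = A" using AB i by auto
  ultimately show ?thesis by simp
qed

lemma pred_sub:
  assumes "\<forall>j\<in>{1..n}. x j \<le> y j" "x i = y i"
  shows "predset n x i \<subseteq> predset n y i"
  using assms by (force simp: predset_def prec_def)

lemma pred_notin: "i \<notin> predset n x i" by (simp add: predset_def prec_irrefl)

lemma pred_in: "predset n x i \<subseteq> {1..n}" by (auto simp: predset_def)

theorem lemma3p3:
  fixes n :: nat and f :: "nat set \<Rightarrow> real" and x d :: "nat \<Rightarrow> real"
  assumes "submodular n f" and "f {} = 0"
    and "\<forall>i\<in>{1..n}. 0 \<le> x i \<and> x i \<le> 1"
    and "\<forall>i\<in>{1..n}. 0 \<le> d i"
  defines "S \<equiv> {i\<in>{1..n}. d i \<noteq> 0}"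
  shows "((\<forall>i\<in>{1..n}. 0 \<le> x i + d i \<and> x i + d i \<le> 1) \<longrightarrow>
            (\<forall>i\<in>{1..n} - S. lovasz_grad n f (\<lambda>j. x j + d j) i \<le> lovasz_grad n f x i))
       \<and> ((\<forall>i\<in>{1..n}. 0 \<le> x i - d i \<and> x i - d i \<le> 1) \<longrightarrow>
            (\<forall>i\<in>{1..n} - S. lovasz_grad n f (\<lambda>j. x j - d j) i \<ge> lovasz_grad n f x i))"
proof (intro conjI impI ballI)
  fix i assume i: "i \<in> {1..n} - S"
  then have i1: "i \<in> {1..n}" and d0: "d i = 0" by (auto simp: S_def)
  have sub: "predset n x i \<subseteq> predset n (\<lambda>j. x j + d j) i"
    by (rule pred_sub) (use assms(4) d0 in auto)
  show "lovasz_grad n f (\<lambda>j. x j + d j) i \<le> lovasz_grad n f x i"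
    unfolding grad_eq[OF i1]
    by (rule submod_step[OF assms(1) sub pred_in i1 pred_notin])
next
  fix i assume i: "i \<in> {1..n} - S"
  then have i1: "i \<in> {1..n}" and d0: "d i = 0" by (auto simp: S_def)
  have sub: "predset n (\<lambda>j. x j - d j) i \<subseteq> predset n x i"
    by (rule pred_sub) (use assms(4) d0 in auto)
  show "lovasz_grad n f (\<lambda>j. x j - d j) i \<ge> lovasz_grad n f x i"
    unfolding grad_eq[OF i1]
    by (rule submod_step[OF assms(1) sub pred_in i1 pred_notin])
qed

end
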